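(* Let $K\subset\mathbb{R}^d$ be nonempty, closed, convex with $\mathrm{B}_d(0)\subseteq K\subseteq R\,\mathrm{B}_d(0)$, let $f$ be convex and $L$-Lipschitz on $K$, let $a,\eta>0$, $(y,s)\in\mathbb{R}^d\times\mathbb{R}$, $Q=\{(x,t):x\in K,f(x)\le at\}$, $z=(y,s-a\eta)$, $\Theta(x,t)=I_Q(x,t)+\frac1{2\eta}\|(x,t)-z\|^2-\frac{a^2\eta}2+as$, and $\zeta(x)=\frac1{2\eta}\|x-y\|^2+\frac1{2\eta}\big[\frac{f(x)}a-(s-a\eta)\big]_+^2$ for $x\in K$. Then: (a) the minimizer of $\Theta$ over $\mathbb{R}^{d+1}$ is $(x_*,t_* )$ with $x_*=\arg\min_{x\in K}\zeta(x)$ and $t_*=\max\{f(x_* )/a,\ s-a\eta\}$; (b) $\zeta$ is $\eta^{-1}$-strongly convex; (c) if $\tilde x\in K$ satisfies $\zeta(\tilde x)-\min_K\zeta\le\frac1{d+1}$ and $\tilde t=\max\{f(\tilde x)/a,s-a\eta\}$, then $\tilde w=(\tilde x,\tilde t)$ satisfies $\|\tilde w-\mathrm{proj}_Q(z)\|\le(1+\frac La)\sqrt{\frac{2\eta}{d+1}}$.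
   Context: $[u]_+=\max\{u,0\}$; $I_Q$ is $0$ on $Q$ and $+\infty$ off $Q$; $\mathrm{proj}_Q(z)=\arg\min_{w\in Q}\|w-z\|$ (which is the minimizer of $\Theta$). *)

theory Defs
  imports "HOL-Analysis.Analysis"
begin

definition conv_indicator :: "'a set \<Rightarrow> 'a \<Rightarrow> ereal" where
  "conv_indicator Q w = (if w \<in> Q then 0 else \<infinity>)"

definition pos_part :: "real \<Rightarrow> real" where
  "pos_part u = max u 0"

definition strongly_convex_on :: "'a::real_normed_vector set \<Rightarrow> real \<Rightarrow> ('a \<Rightarrow> real) \<Rightarrow> bool" where
  "strongly_convex_on S \<mu> g \<longleftrightarrow> convex S \<and>
     (\<forall>x\<in>S. \<forall>y\<in>S. \<forall>u::real. 0 \<le> u \<and> u \<le> 1 \<longrightarrow>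
        g ((1 - u) *\<^sub>R x + u *\<^sub>R y) \<le> (1 - u) * g x + u * g y - \<mu> / 2 * u * (1 - u) * (norm (x - y))\<^sup>2)"

end

theory Submission
  imports Defs
begin


lemma sq_norm_interp:
  fixes x y w :: "'a::real_inner"
  shows "(norm ((1 - u) *\<^sub>R x + u *\<^sub>R w - y))\<^sup>2
       = (1 - u) * (norm (x - y))\<^sup>2 + u * (norm (w - y))\<^sup>2 - u * (1 - u) * (norm (x - w))\<^sup>2"
proof -
  have e: "(1 - u) *\<^sub>R x + u *\<^sub>R w - y = (1 - u) *\<^sub>R (x - y) + u *\<^sub>R (w - y)"
    by (simp add: algebra_simps)
  have e2: "x - w = (x - y) - (w - y)" by simp
  show ?thesis
    unfolding e e2 power2_norm_eq_inner
    by (simp add: inner_add_left inner_add_right inner_diff_left inner_diff_right inner_commute algebra_simps power2_eq_square)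
qed

lemma sq_convex_real:
  fixes p q u :: real
  assumes "0 \<le> u" "u \<le> 1"
  shows "((1 - u) * p + u * q)\<^sup>2 \<le> (1 - u) * p\<^sup>2 + u * q\<^sup>2"
proof -
  have "(1 - u) * p\<^sup>2 + u * q\<^sup>2 - ((1 - u) * p + u * q)\<^sup>2 = u * (1 - u) * (p - q)\<^sup>2"
    by (simp add: algebra_simps power2_eq_square)
  moreover have "u * (1 - u) * (p - q)\<^sup>2 \<ge> 0" using assms by simp
  ultimately show ?thesis by linarith
qed

lemma pos_part_sq_le:
  assumes "v \<le> t"
  shows "(pos_part (v - c))\<^sup>2 \<le> (t - c)\<^sup>2"
  using assms unfolding pos_part_def
  by (cases "v - c \<ge> 0") (auto intro: power_mono)

lemma proj_ineq:
  fixes S :: "'b::euclidean_space set"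
  assumes "convex S" "closed S" "w \<in> S"
  shows "(norm (w - closest_point S z))\<^sup>2 + (norm (closest_point S z - z))\<^sup>2 \<le> (norm (w - z))\<^sup>2"
proof -
  let ?P = "closest_point S z"
  have d: "inner (z - ?P) (w - ?P) \<le> 0" using closest_point_dot[OF assms] .
  have e: "w - z = (w - ?P) - (z - ?P)" by simp
  have "(norm (w - z))\<^sup>2 = (norm (w - ?P))\<^sup>2 + (norm (z - ?P))\<^sup>2 - 2 * inner (z - ?P) (w - ?P)"
    unfolding e power2_norm_eq_inner
    by (simp add: inner_diff_left inner_diff_right inner_commute algebra_simps)
  moreover have "(norm (z - ?P))\<^sup>2 = (norm (?P - z))\<^sup>2" by (simp add: norm_minus_commute)
  ultimately show ?thesis using d by linarith
qed

theorem lemma18: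
  fixes K :: "'a::euclidean_space set" and f :: "'a \<Rightarrow> real"
    and R L a \<eta> s :: real and y :: 'a
    and Q :: "('a \<times> real) set" and z :: "'a \<times> real"
    and \<Theta> :: "'a \<times> real \<Rightarrow> ereal" and \<zeta> :: "'a \<Rightarrow> real"
  assumes K_ne: "K \<noteq> {}" and K_closed: "closed K" and K_convex: "convex K"
    and K_in: "ball 0 1 \<subseteq> K" and K_out: "K \<subseteq> cball 0 R"
    and f_convex: "convex_on K f" and f_lip: "L-lipschitz_on K f"
    and a_pos: "a > 0" and eta_pos: "\<eta> > 0"
    and Q_def: "Q \<equiv> {(x, t). x \<in> K \<and> f x \<le> a * t}"
    and z_def: "z \<equiv> (y, s - a * \<eta>)"
    and Theta_def: "\<Theta> \<equiv> (\<lambda>w. conv_indicator Q w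
                    + ereal (1 / (2 * \<eta>) * (norm (w - z))\<^sup>2 - a\<^sup>2 * \<eta> / 2 + a * s))"
    and zeta_def: "\<zeta> \<equiv> (\<lambda>x. 1 / (2 * \<eta>) * (norm (x - y))\<^sup>2
                    + 1 / (2 * \<eta>) * (pos_part (f x / a - (s - a * \<eta>)))\<^sup>2)"
  shows
    "(\<exists>!x. x \<in> K \<and> (\<forall>x'\<in>K. \<zeta> x \<le> \<zeta> x')) \<and>
     (let xs = (THE x. x \<in> K \<and> (\<forall>x'\<in>K. \<zeta> x \<le> \<zeta> x'));
          ts = max (f xs / a) (s - a * \<eta>)
      in (\<forall>v. \<Theta> (xs, ts) \<le> \<Theta> v) \<and> (\<forall>w. (\<forall>v. \<Theta> w \<le> \<Theta> v) \<longrightarrow> w = (xs, ts)))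
     \<and> strongly_convex_on K (1 / \<eta>) \<zeta>
     \<and> (\<forall>xt\<in>K. \<zeta> xt - Inf (\<zeta> ` K) \<le> 1 / (real DIM('a) + 1) \<longrightarrow>
          norm ((xt, max (f xt / a) (s - a * \<eta>)) - closest_point Q z)
            \<le> (1 + L / a) * sqrt (2 * \<eta> / (real DIM('a) + 1)))"
proof -
  define c where "c = s - a * \<eta>"
  define T where "T x = max (f x / a) c" for x
  have Lnn: "L \<ge> 0" using lipschitz_on_nonneg[OF f_lip] .
  have fcont: "continuous_on K f" using lipschitz_on_continuous_on[OF f_lip] .
  have zc: "z = (y, c)" using z_def c_def by simp
  have Qm: "(x, t) \<in> Q \<longleftrightarrow> x \<in> K \<and> f x \<le> a * t" for x t using Q_def by simp
  have hT: "(x, T x) \<in> Q" if "x \<in> K" for x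
  proof -
    have "f x \<le> a * (f x / a)" using a_pos by simp
    also have "\<dots> \<le> a * T x" using a_pos unfolding T_def by (intro mult_left_mono) auto
    finally show ?thesis using that Qm by simp
  qed
  have pT: "pos_part (f x / a - c) = T x - c" for x
    unfolding pos_part_def T_def by simp
  have nP: "(norm ((x, t) - z))\<^sup>2 = (norm (x - y))\<^sup>2 + (t - c)\<^sup>2" for x t
    unfolding zc by (simp add: norm_Pair)
  have zc2: "\<zeta> x = 1 / (2 * \<eta>) * (norm (x - y))\<^sup>2 + 1 / (2 * \<eta>) * (pos_part (f x / a - c))\<^sup>2" for x
    using zeta_def c_def by simp
  have F1: "(norm ((x, T x) - z))\<^sup>2 = 2 * \<eta> * \<zeta> x" for x
    unfolding nP zc2 pT using eta_pos by (simp add: field_simps)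
  have F2: "2 * \<eta> * \<zeta> x \<le> (norm ((x, t) - z))\<^sup>2" if "(x, t) \<in> Q" for x t
  proof -
    have "f x / a \<le> t" using that Qm a_pos by (simp add: divide_le_eq mult.commute)
    then have "(pos_part (f x / a - c))\<^sup>2 \<le> (t - c)\<^sup>2" by (rule pos_part_sq_le)
    then show ?thesis unfolding nP zc2 using eta_pos by (simp add: field_simps)
  qed
  have Qconv: "convex Q"
  proof (rule convexI)
    fix w1 w2 :: "'a \<times> real" and u v :: real
    assume w: "w1 \<in> Q" "w2 \<in> Q" "0 \<le> u" "0 \<le> v" "u + v = 1"
    obtain x1 t1 x2 t2 where ww: "w1 = (x1, t1)" "w2 = (x2, t2)" by (cases w1, cases w2) auto
    have x: "x1 \<in> K" "x2 \<in> K" "f x1 \<le> a * t1" "f x2 \<le> a * t2" using w ww Qm by auto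
    have vv: "u = 1 - v" using w by simp
    have "f (u *\<^sub>R x1 + v *\<^sub>R x2) \<le> u * f x1 + v * f x2"
      using convex_onD[OF f_convex, of v x1 x2] w x unfolding vv by simp
    also have "\<dots> \<le> u * (a * t1) + v * (a * t2)"
      using x w by (intro add_mono mult_left_mono) auto
    finally have "f (u *\<^sub>R x1 + v *\<^sub>R x2) \<le> a * (u * t1 + v * t2)" by (simp add: algebra_simps)
    moreover have "u *\<^sub>R x1 + v *\<^sub>R x2 \<in> K" using convexD[OF K_convex x(1,2)] w by simp
    ultimately show "u *\<^sub>R w1 + v *\<^sub>R w2 \<in> Q" unfolding ww using Qm by simp
  qed
  have Qclosed: "closed Q"
  proof -
    have cont: "continuous_on (K \<times> UNIV) (\<lambda>w. f (fst w) - a * snd w)"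
      by (intro continuous_intros continuous_on_compose2[OF fcont]) auto
    have "closed ((K \<times> UNIV) \<inter> (\<lambda>w. f (fst w) - a * snd w) -` {..0})"
      by (rule continuous_closed_preimage[OF cont]) (auto intro: closed_Times K_closed)
    moreover have "(K \<times> UNIV) \<inter> (\<lambda>w. f (fst w) - a * snd w) -` {..0} = Q"
      using Qm by auto
    ultimately show ?thesis by simp
  qed
  obtain x0 where x0: "x0 \<in> K" using K_ne by blast
  have Qne: "Q \<noteq> {}" using hT[OF x0] by blast
  define P where "P = closest_point Q z"
  have PQ: "P \<in> Q" unfolding P_def using closest_point_in_set[OF Qclosed Qne] .
  have Ple: "norm (P - z) \<le> norm (w - z)" if "w \<in> Q" for w
    using closest_point_le[OF Qclosed that, of z] unfolding P_def by (simp add: dist_norm norm_minus_commute)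
  have Psq: "(norm (P - z))\<^sup>2 \<le> (norm (w - z))\<^sup>2" if "w \<in> Q" for w
    using Ple[OF that] by (simp add: power_mono)
  have Puniq: "w = P" if "w \<in> Q" "\<And>v. v \<in> Q \<Longrightarrow> norm (w - z) \<le> norm (v - z)" for w
    unfolding P_def
    by (rule closest_point_unique[OF Qconv Qclosed that(1)])
       (use that(2) in \<open>simp add: dist_norm norm_minus_commute\<close>)
  obtain p q where Ppq: "P = (p, q)" by (cases P) auto
  have pK: "p \<in> K" using PQ Ppq Qm by simp
  have pmin: "\<zeta> p \<le> \<zeta> x" if "x \<in> K" for x
  proof -
    have "2 * \<eta> * \<zeta> p \<le> (norm (P - z))\<^sup>2" using F2 PQ Ppq by simp
    also have "\<dots> \<le> 2 * \<eta> * \<zeta> x" using Psq[OF hT[OF that]] F1 by simp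
    finally show ?thesis using eta_pos by simp
  qed
  have minuniq: "(x, T x) = P" if "x \<in> K" "\<forall>x'\<in>K. \<zeta> x \<le> \<zeta> x'" for x
  proof (rule Puniq[OF hT[OF that(1)]])
    fix v assume v: "v \<in> Q"
    obtain xv tv where vv: "v = (xv, tv)" by (cases v) auto
    have xvK: "xv \<in> K" using v vv Qm by simp
    have "(norm ((x, T x) - z))\<^sup>2 = 2 * \<eta> * \<zeta> x" by (rule F1)
    also have "\<dots> \<le> 2 * \<eta> * \<zeta> xv" using that(2) xvK eta_pos by simp
    also have "\<dots> \<le> (norm (v - z))\<^sup>2" using F2 v vv by simp
    finally show "norm ((x, T x) - z) \<le> norm (v - z)" by (simp add: power2_le_iff_abs_le)
  qed
  have PT: "P = (p, T p)" using minuniq[OF pK] pmin pK by simp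
  have ex1: "\<exists>!x. x \<in> K \<and> (\<forall>x'\<in>K. \<zeta> x \<le> \<zeta> x')"
  proof (rule ex1I[of _ p])
    show "p \<in> K \<and> (\<forall>x'\<in>K. \<zeta> p \<le> \<zeta> x')" using pK pmin by simp
  next
    fix x assume "x \<in> K \<and> (\<forall>x'\<in>K. \<zeta> x \<le> \<zeta> x')"
    then have "(x, T x) = P" using minuniq by blast
    then show "x = p" using Ppq by simp
  qed
  have theq: "(THE x. x \<in> K \<and> (\<forall>x'\<in>K. \<zeta> x \<le> \<zeta> x')) = p"
    using ex1 pK pmin by (intro the1_equality) auto
  have Thz: "\<Theta> w = (if w \<in> Q then ereal (1 / (2 * \<eta>) * (norm (w - z))\<^sup>2 - a\<^sup>2 * \<eta> / 2 + a * s) else \<infinity>)" for w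
    using Theta_def by (simp add: conv_indicator_def)
  have ThP: "\<Theta> P \<le> \<Theta> v" for v
  proof (cases "v \<in> Q")
    case True
    have "1 / (2 * \<eta>) * (norm (P - z))\<^sup>2 \<le> 1 / (2 * \<eta>) * (norm (v - z))\<^sup>2"
      using Psq[OF True] eta_pos by (intro mult_left_mono) auto
    then show ?thesis using True PQ by (simp add: Thz)
  next
    case False then show ?thesis by (simp add: Thz)
  qed
  have ThU: "w = P" if "\<forall>v. \<Theta> w \<le> \<Theta> v" for w
  proof -
    have wQ: "w \<in> Q"
    proof (rule ccontr)
      assume "w \<notin> Q"
      then have "\<Theta> w = \<infinity>" by (simp add: Thz)
      moreover have "\<Theta> P \<noteq> \<infinity>" using PQ by (simp add: Thz)
      ultimately show False using that[rule_format, of P] by simp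
    qed
    show ?thesis
    proof (rule Puniq[OF wQ])
      fix v assume v: "v \<in> Q"
      have "\<Theta> w \<le> \<Theta> v" using that by blast
      then have "1 / (2 * \<eta>) * (norm (w - z))\<^sup>2 \<le> 1 / (2 * \<eta>) * (norm (v - z))\<^sup>2"
        using wQ v by (simp add: Thz)
      then have "(norm (w - z))\<^sup>2 \<le> (norm (v - z))\<^sup>2" using eta_pos
        by (simp add: divide_le_cancel)
      then show "norm (w - z) \<le> norm (v - z)" by (simp add: power2_le_iff_abs_le)
    qed
  qed
  have partA: "let xs = (THE x. x \<in> K \<and> (\<forall>x'\<in>K. \<zeta> x \<le> \<zeta> x'));
          ts = max (f xs / a) (s - a * \<eta>)
      in (\<forall>v. \<Theta> (xs, ts) \<le> \<Theta> v) \<and> (\<forall>w. (\<forall>v. \<Theta> w \<le> \<Theta> v) \<longrightarrow> w = (xs, ts))"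
  proof -
    have "(p, max (f p / a) (s - a * \<eta>)) = P" using PT T_def c_def by simp
    then show ?thesis unfolding theq Let_def using ThP ThU by simp
  qed
  define g where "g x = pos_part (f x / a - c)" for x
  have gconv: "g ((1 - u) *\<^sub>R x + u *\<^sub>R w) \<le> (1 - u) * g x + u * g w"
    if "x \<in> K" "w \<in> K" "0 \<le> u" "u \<le> 1" for x w u
  proof -
    have "f ((1 - u) *\<^sub>R x + u *\<^sub>R w) \<le> (1 - u) * f x + u * f w"
      using convex_onD[OF f_convex] that by simp
    then have "f ((1 - u) *\<^sub>R x + u *\<^sub>R w) / a \<le> ((1 - u) * f x + u * f w) / a"
      using a_pos by (intro divide_right_mono) auto
    also have "\<dots> = (1 - u) * (f x / a) + u * (f w / a)" by (simp add: add_divide_distrib)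
    finally have h: "f ((1 - u) *\<^sub>R x + u *\<^sub>R w) / a - c \<le> (1 - u) * (f x / a - c) + u * (f w / a - c)"
      by (simp add: algebra_simps)
    have "(1 - u) * (f x / a - c) + u * (f w / a - c) \<le> (1 - u) * g x + u * g w"
      unfolding g_def pos_part_def using that by (intro add_mono mult_left_mono) auto
    moreover have "0 \<le> (1 - u) * g x + u * g w" unfolding g_def pos_part_def using that by simp
    ultimately show ?thesis using h unfolding g_def pos_part_def by simp
  qed
  have g0: "g x \<ge> 0" for x unfolding g_def pos_part_def by simp
  have zg: "\<zeta> x = 1 / (2 * \<eta>) * (norm (x - y))\<^sup>2 + 1 / (2 * \<eta>) * (g x)\<^sup>2" for x
    unfolding zc2 g_def by simp
  have partB: "strongly_convex_on K (1 / \<eta>) \<zeta>"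
    unfolding strongly_convex_on_def
  proof (intro conjI ballI allI impI)
    show "convex K" by (rule K_convex)
  next
    fix x w :: 'a and u :: real
    assume xw: "x \<in> K" "w \<in> K" and u: "0 \<le> u \<and> u \<le> 1"
    have g2: "(g ((1 - u) *\<^sub>R x + u *\<^sub>R w))\<^sup>2 \<le> (1 - u) * (g x)\<^sup>2 + u * (g w)\<^sup>2"
    proof -
      have "(g ((1 - u) *\<^sub>R x + u *\<^sub>R w))\<^sup>2 \<le> ((1 - u) * g x + u * g w)\<^sup>2"
        using gconv[OF xw] u g0 by (intro power_mono) auto
      also have "\<dots> \<le> (1 - u) * (g x)\<^sup>2 + u * (g w)\<^sup>2" using sq_convex_real u by blast
      finally show ?thesis .
    qed
    have n: "(norm ((1 - u) *\<^sub>R x + u *\<^sub>R w - y))\<^sup>2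
       = (1 - u) * (norm (x - y))\<^sup>2 + u * (norm (w - y))\<^sup>2 - u * (1 - u) * (norm (x - w))\<^sup>2"
      by (rule sq_norm_interp)
    have "\<zeta> ((1 - u) *\<^sub>R x + u *\<^sub>R w) = 1 / (2 * \<eta>) * ((norm ((1 - u) *\<^sub>R x + u *\<^sub>R w - y))\<^sup>2
        + (g ((1 - u) *\<^sub>R x + u *\<^sub>R w))\<^sup>2)" unfolding zg by (simp add: algebra_simps)
    also have "\<dots> \<le> 1 / (2 * \<eta>) * ((1 - u) * (norm (x - y))\<^sup>2 + u * (norm (w - y))\<^sup>2 - u * (1 - u) * (norm (x - w))\<^sup>2
        + ((1 - u) * (g x)\<^sup>2 + u * (g w)\<^sup>2))"
      unfolding n using g2 eta_pos by (intro mult_left_mono) auto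
    also have "\<dots> = (1 - u) * \<zeta> x + u * \<zeta> w - 1 / \<eta> / 2 * u * (1 - u) * (norm (x - w))\<^sup>2"
      unfolding zg using eta_pos by (simp add: field_simps)
    finally show "\<zeta> ((1 - u) *\<^sub>R x + u *\<^sub>R w) \<le> (1 - u) * \<zeta> x + u * \<zeta> w - 1 / \<eta> / 2 * u * (1 - u) * (norm (x - w))\<^sup>2" .
  qed
  have infz: "Inf (\<zeta> ` K) = \<zeta> p"
    using pK pmin by (intro cInf_eq_minimum) auto
  have partC: "\<forall>xt\<in>K. \<zeta> xt - Inf (\<zeta> ` K) \<le> 1 / (real DIM('a) + 1) \<longrightarrow>
          norm ((xt, max (f xt / a) (s - a * \<eta>)) - closest_point Q z)
            \<le> (1 + L / a) * sqrt (2 * \<eta> / (real DIM('a) + 1))"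
  proof (intro ballI impI)
    fix xt assume xt: "xt \<in> K" and le: "\<zeta> xt - Inf (\<zeta> ` K) \<le> 1 / (real DIM('a) + 1)"
    let ?w = "(xt, T xt)"
    have "(norm (?w - P))\<^sup>2 + (norm (P - z))\<^sup>2 \<le> (norm (?w - z))\<^sup>2"
      unfolding P_def by (rule proj_ineq[OF Qconv Qclosed hT[OF xt]])
    moreover have "(norm (P - z))\<^sup>2 = 2 * \<eta> * \<zeta> p" using F1[of p] PT by simp
    moreover have "(norm (?w - z))\<^sup>2 = 2 * \<eta> * \<zeta> xt" by (rule F1)
    ultimately have "(norm (?w - P))\<^sup>2 \<le> 2 * \<eta> * (\<zeta> xt - \<zeta> p)" by (simp add: algebra_simps)
    also have "\<dots> \<le> 2 * \<eta> * (1 / (real DIM('a) + 1))"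
      using le infz eta_pos by (intro mult_left_mono) auto
    finally have "(norm (?w - P))\<^sup>2 \<le> 2 * \<eta> / (real DIM('a) + 1)" by simp
    then have "norm (?w - P) \<le> sqrt (2 * \<eta> / (real DIM('a) + 1))"
      using real_le_rsqrt by blast
    also have "\<dots> \<le> (1 + L / a) * sqrt (2 * \<eta> / (real DIM('a) + 1))"
    proof -
      have "1 \<le> 1 + L / a" using Lnn a_pos by simp
      moreover have "0 \<le> sqrt (2 * \<eta> / (real DIM('a) + 1))" using eta_pos by simp
      ultimately show ?thesis using mult_right_mono[of 1 "1 + L / a"] by fastforce
    qed
    finally show "norm ((xt, max (f xt / a) (s - a * \<eta>)) - closest_point Q z)
            \<le> (1 + L / a) * sqrt (2 * \<eta> / (real DIM('a) + 1))"
      unfolding T_def c_def P_def by simp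
  qed
  show ?thesis using ex1 partA partB partC by blast
qed

end
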